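(* Let $n=p_1p_2\cdots p_r$, where $r\geq 3$ and $p_1<p_2<\cdots<p_r$ are primes, and let $3\leq s\leq r$. Then $\deg(p_{s-1}p_s\cdots p_r)\geq\deg(p_sp_{s+1}\cdots p_r)$ in $\mathcal{P}(C_n)$ if and only if $$p_sp_{s+1}\cdots p_r\geq\left(\frac{p_1p_2\cdots p_{s-2}}{\phi(p_1p_2\cdots p_{s-2})}-1\right)\phi(p_{s-1})+1. \qquad ( * )$$ Further, $\deg(p_{s-1}p_s\cdots p_r)=\deg(p_sp_{s+1}\cdots p_r)$ if and only if equality holds in $( * )$.
   Context: For a finite group $G$, the power graph $\mathcal{P}(G)$ is the simple undirected graph with vertex set $G$ in which two distinct vertices are adjacent if one is an integral power of the other. $C_n$ denotes the cyclic group of order $n$, identified with $\mathbb{Z}_n=\{0,1,\ldots,n-1\}$, so a positive divisor $d<n$ of $n$ is regarded as the element $d\in\mathbb{Z}_n$. $\deg(a)$ is the degree of vertex $a$ in $\mathcal{P}(C_n)$ and $\phi$ is Euler's totient function. *)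

theory Defs
  imports "HOL-Number_Theory.Number_Theory"
begin

text \<open>Power graph of the cyclic group C_n, identified with Z_n = {0,...,n-1} (additive).
  An integral power of a is k*a mod n for an integer k.\<close>

definition cyc_power_of :: "nat \<Rightarrow> nat \<Rightarrow> nat \<Rightarrow> bool" where
  "cyc_power_of n b a \<longleftrightarrow> (\<exists>k::int. int b = (k * int a) mod int n)"

definition power_graph_adj :: "nat \<Rightarrow> nat \<Rightarrow> nat \<Rightarrow> bool" where
  "power_graph_adj n a b \<longleftrightarrow> a \<in> {0..<n} \<and> b \<in> {0..<n} \<and> a \<noteq> b \<and>
     (cyc_power_of n b a \<or> cyc_power_of n a b)"

definition pg_deg :: "nat \<Rightarrow> nat \<Rightarrow> nat" where
  "pg_deg n a = card {b \<in> {0..<n}. power_graph_adj n a b}"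

end

theory Submission imports Defs begin

lemma cp1:
  assumes "g dvd n" "b < n"
  shows "cyc_power_of n b g \<longleftrightarrow> g dvd b"
proof
  assume "cyc_power_of n b g"
  then obtain k where k: "int b = (k * int g) mod int n" unfolding cyc_power_of_def by blast
  have "int g dvd (k * int g) mod int n"
    using assms(1) by (simp add: dvd_mod)
  then show "g dvd b" using k by (metis int_dvd_int_iff)
next
  assume "g dvd b"
  then obtain c where "b = g * c" by blast
  then show "cyc_power_of n b g" unfolding cyc_power_of_def
    using assms(2) by (intro exI[of _ "int c"]) (metis mult.commute of_nat_mult of_nat_less_iff of_nat_0_le_iff mod_pos_pos_trivial)
qed

lemma cp2:
  assumes "g dvd n" "g < n"
  shows "cyc_power_of n g b \<longleftrightarrow> gcd b n dvd g"
proof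
  assume "cyc_power_of n g b"
  then obtain k where k: "int g = (k * int b) mod int n" unfolding cyc_power_of_def by blast
  have "gcd (int b) (int n) dvd (k * int b) mod int n"
    by (simp add: dvd_mod)
  then show "gcd b n dvd g" using k by (metis gcd_int_int_eq int_dvd_int_iff)
next
  assume "gcd b n dvd g"
  then obtain c where c: "g = gcd b n * c" by blast
  obtain u v where uv: "u * int b + v * int n = gcd (int b) (int n)"
    using bezout_int by blast
  have "int g = (u * int c * int b) mod int n"
  proof -
    have "int g = (u * int b + v * int n) * int c" using c uv by (simp add: gcd_int_int_eq)
    also have "\<dots> = u * int c * int b + (v * int c) * int n" by (simp add: algebra_simps)
    finally have "int g mod int n = (u * int c * int b) mod int n" by simp
    moreover have "int g mod int n = int g" using assms(2) by simp
    ultimately show ?thesis by simp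
  qed
  then show "cyc_power_of n g b" unfolding cyc_power_of_def by blast
qed

lemma gcd_dvd_iff:
  fixes n M g b :: nat
  assumes "n = M * g" "coprime M g"
  shows "gcd b n dvd g \<longleftrightarrow> coprime b M"
proof
  assume h: "gcd b n dvd g"
  show "coprime b M"
  proof (rule coprimeI)
    fix d :: nat assume d: "d dvd b" "d dvd M"
    have "d dvd n" using d(2) assms(1) by simp
    then have "d dvd gcd b n" using d(1) by simp
    with h have "d dvd g" by (meson dvd_trans)
    with \<open>d dvd M\<close> assms(2) show "is_unit d" using coprime_common_divisor by blast
  qed
next
  assume "coprime b M"
  then have "gcd b n = gcd b g" using assms(1) by (simp add: gcd_mult_right_left_cancel)
  then show "gcd b n dvd g" by simp
qed

lemma tot_eq:
  fixes M :: nat assumes "M \<ge> 2"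
  shows "totatives M = {r. r < M \<and> coprime r M}"
proof -
  have "\<not> coprime 0 M" using assms by simp
  moreover have "\<not> coprime M M" using assms by simp
  ultimately show ?thesis using assms
    by (auto simp: in_totatives_iff intro: totatives_less) (metis \<open>\<not> coprime 0 M\<close> gr0I)
qed

lemma deg_formula:
  fixes M g n :: nat
  assumes n: "n = M*g" and cop: "coprime M g" and M2: "M \<ge> 2" and gp: "g > 0"
  shows "pg_deg n g = M - 1 + totient M * (g - 1)"
proof -
  define S1 where "S1 = {x \<in> {0..<n}. g dvd x}"
  define S2 where "S2 = {x \<in> {0..<n}. coprime x M}"
  have gdn: "g dvd n" using n by simp
  have gn: "g < n" using n M2 gp by simp
  have set: "{b \<in> {0..<n}. power_graph_adj n g b} = (S1 \<union> S2) - {g}"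
  proof -
    have "power_graph_adj n g b \<longleftrightarrow> g \<noteq> b \<and> (g dvd b \<or> coprime b M)" if "b < n" for b
      unfolding power_graph_adj_def using that gn
      by (simp add: cp1[OF gdn that] cp2[OF gdn gn] gcd_dvd_iff[OF n cop])
    then show ?thesis unfolding S1_def S2_def by auto
  qed
  have S1: "S1 = (\<lambda>k. g*k) ` {..<M}"
  proof (rule Set.set_eqI)
    fix x show "x \<in> S1 \<longleftrightarrow> x \<in> (\<lambda>k. g*k) ` {..<M}"
    proof
      assume "x \<in> S1"
      then obtain k where "x = g*k" "x < n" unfolding S1_def by auto
      then show "x \<in> (\<lambda>k. g*k) ` {..<M}" using n gp by (auto simp: mult.commute)
    next
      assume "x \<in> (\<lambda>k. g*k) ` {..<M}"
      then obtain k where "x = g*k" "k < M" by auto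
      then show "x \<in> S1" unfolding S1_def using n gp by (auto simp: mult.commute)
    qed
  qed
  have c1: "card S1 = M" unfolding S1 using gp by (simp add: card_image inj_on_def)
  have S12: "S1 \<inter> S2 = (\<lambda>k. g*k) ` totatives M"
  proof (rule Set.set_eqI)
    fix x show "x \<in> S1 \<inter> S2 \<longleftrightarrow> x \<in> (\<lambda>k. g*k) ` totatives M"
    proof
      assume "x \<in> S1 \<inter> S2"
      then have xi: "x \<in> (\<lambda>k. g*k) ` {..<M}" "coprime x M" unfolding S1 S2_def by auto
      then obtain k where k: "x = g*k" "k < M" by auto
      then have "coprime k M" using xi(2) by simp
      then show "x \<in> (\<lambda>k. g*k) ` totatives M" using k tot_eq[OF M2] by auto
    next
      assume "x \<in> (\<lambda>k. g*k) ` totatives M"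
      then obtain k where k: "x = g*k" "k < M" "coprime k M" using tot_eq[OF M2] by auto
      then have "coprime x M" using cop by (simp add: coprime_commute)
      then show "x \<in> S1 \<inter> S2" using k unfolding S1 S2_def using n gp by (auto simp: mult.commute)
    qed
  qed
  have c12: "card (S1 \<inter> S2) = totient M" unfolding S12 totient_def
    using gp by (simp add: card_image inj_on_def)
  have S2: "S2 = (\<lambda>(r,k). r + M*k) ` (totatives M \<times> {..<g})"
  proof (rule Set.set_eqI)
    fix x show "x \<in> S2 \<longleftrightarrow> x \<in> (\<lambda>(r,k). r + M*k) ` (totatives M \<times> {..<g})"
    proof
      assume "x \<in> S2"
      then have x: "x < M*g" "coprime x M" unfolding S2_def n by auto
      have xe: "x = (\<lambda>(r,k). r + M*k) (x mod M, x div M)" by simp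
      have "coprime (x mod M) M" using x(2) M2 coprime_mod_left_iff[of M x] by simp
      moreover have "x mod M < M" using M2 by simp
      moreover have "x div M < g" using x(1) M2
        by (simp add: less_mult_imp_div_less mult.commute)
      ultimately have "(x mod M, x div M) \<in> totatives M \<times> {..<g}"
        using tot_eq[OF M2] by simp
      then show "x \<in> (\<lambda>(r,k). r + M*k) ` (totatives M \<times> {..<g})"
        by (subst xe) (rule imageI)
    next
      assume "x \<in> (\<lambda>(r,k). r + M*k) ` (totatives M \<times> {..<g})"
      then obtain r k where rk: "x = r + M*k" "r < M" "coprime r M" "k < g"
        using tot_eq[OF M2] by auto
      have "x < M*g"
      proof -
        have "r + M*k < M + M*k" using rk by simp
        also have "\<dots> = M*(k+1)" by simp
        also have "\<dots> \<le> M*g" using rk(4) by (intro mult_le_mono2) simp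
        finally show ?thesis using rk(1) by simp
      qed
      moreover have "coprime x M"
      proof -
        have "(r + M*k) mod M = r" using rk(2) by simp
        then have "coprime ((r + M*k) mod M) M" using rk(3) by simp
        then show ?thesis using rk(1) M2 coprime_mod_left_iff[of M "r + M*k"] by simp
      qed
      ultimately show "x \<in> S2" unfolding S2_def n by auto
    qed
  qed
  have inj: "inj_on (\<lambda>(r,k). r + M*k) (totatives M \<times> {..<g})"
  proof (rule inj_onI, clarify)
    fix r k r' k' assume a: "r \<in> totatives M" "r' \<in> totatives M" "r + M*k = r' + M*k'"
    have lt: "r < M" "r' < M" using a tot_eq[OF M2] by auto
    have "(r + M*k) mod M = r" "(r' + M*k') mod M = r'" using lt by simp_all
    then have rr: "r = r'" using a(3) by simp
    then have "M*k = M*k'" using a(3) by simp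
    then have "k = k'" using M2 by simp
    then show "r = r' \<and> k = k'" using rr by simp
  qed
  have c2: "card S2 = totient M * g" unfolding S2 totient_def
    using card_image[OF inj] by (simp add: card_cartesian_product)
  have fin: "finite S1" "finite S2" unfolding S1_def S2_def by auto
  have gin: "g \<in> S1 \<union> S2" unfolding S1_def using gn by auto
  have "card (S1 \<union> S2) + totient M = M + totient M * g"
    using card_Un_Int[OF fin] c1 c2 c12 by simp
  then have "card ((S1 \<union> S2) - {g}) = M + totient M * g - totient M - 1"
    using gin fin by (simp add: card_Diff_singleton)
  moreover have "totient M \<ge> 1" using M2 by (simp add: Suc_leI)
  ultimately have "card ((S1 \<union> S2) - {g}) = M - 1 + totient M * (g - 1)"
    using gp M2 by (simp add: algebra_simps diff_mult_distrib2)
  then show ?thesis unfolding pg_deg_def set .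
qed


lemma coprime_blocks:
  fixes p :: "nat \<Rightarrow> nat"
  assumes pr: "\<And>i. i \<in> {1..r} \<Longrightarrow> prime (p i)"
    and mono: "\<And>i j. i \<in> {1..r} \<Longrightarrow> j \<in> {1..r} \<Longrightarrow> i < j \<Longrightarrow> p i < p j"
    and IJ: "I \<subseteq> {1..r}" "J \<subseteq> {1..r}" "\<And>i j. i \<in> I \<Longrightarrow> j \<in> J \<Longrightarrow> i < j"
  shows "coprime (\<Prod>i\<in>I. p i) (\<Prod>j\<in>J. p j)"
proof (rule prod_coprime_left, rule prod_coprime_right)
  fix i j assume "i \<in> I" "j \<in> J"
  then have ij: "i \<in> {1..r}" "j \<in> {1..r}" "i < j" using IJ by blast+
  then have "p i < p j" by (rule mono)
  note ij = ij this
  show "coprime (p i) (p j)" using pr[OF ij(1)] pr[OF ij(2)] ij(4) by (intro primes_coprime) auto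
qed

theorem lemma3p2:
  fixes p :: "nat \<Rightarrow> nat" and r s n :: nat
  assumes "r \<ge> 3"
    and "\<And>i. i \<in> {1..r} \<Longrightarrow> prime (p i)"
    and "\<And>i j. i \<in> {1..r} \<Longrightarrow> j \<in> {1..r} \<Longrightarrow> i < j \<Longrightarrow> p i < p j"
    and "n = (\<Prod>i=1..r. p i)"
    and "3 \<le> s" and "s \<le> r"
  shows "(pg_deg n (\<Prod>i=s-1..r. p i) \<ge> pg_deg n (\<Prod>i=s..r. p i) \<longleftrightarrow>
           real (\<Prod>i=s..r. p i) \<ge>
             (real (\<Prod>i=1..s-2. p i) / real (totient (\<Prod>i=1..s-2. p i)) - 1)
               * real (totient (p (s-1))) + 1)
       \<and> (pg_deg n (\<Prod>i=s-1..r. p i) = pg_deg n (\<Prod>i=s..r. p i) \<longleftrightarrow>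
           real (\<Prod>i=s..r. p i) =
             (real (\<Prod>i=1..s-2. p i) / real (totient (\<Prod>i=1..s-2. p i)) - 1)
               * real (totient (p (s-1))) + 1)"
proof -
  note pr = assms(2) and mono = assms(3)
  define A where "A = (\<Prod>i=1..s-2. p i)"
  define B where "B = (\<Prod>i=s..r. p i)"
  define q where "q = p (s-1)"
  have pos: "\<And>i. i \<in> {1..r} \<Longrightarrow> p i > 0" using pr prime_gt_0_nat by blast
  have q: "prime q" unfolding q_def using assms(5,6) by (intro pr) auto
  have Apos: "A > 0" unfolding A_def using pos assms(6) by (intro prod_pos) auto
  have Bpos: "B > 0" unfolding B_def using pos assms(5) by (intro prod_pos) auto
  have "p 1 dvd A" unfolding A_def using assms(5) by (intro dvd_prodI) auto
  moreover have "prime (p 1)" using pr assms(1) by auto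
  ultimately have "A \<noteq> 1" using not_prime_1 by auto
  then have A2: "A \<ge> 2" using Apos by linarith
  have qB: "(\<Prod>i=s-1..r. p i) = q * B" unfolding q_def B_def
    using assms(5,6) prod.atLeast_Suc_atMost[of "s-1" r p] by (simp add: Suc_diff_Suc)
  have split: "{1..r} = {1..s-2} \<union> {s-1..r}" using assms(5,6) by auto
  have nA: "n = A * (q * B)" unfolding assms(4) A_def qB[symmetric] split
    by (rule prod.union_disjoint) auto
  have c1: "coprime A (q*B)" unfolding A_def qB[symmetric]
    using assms(5,6) by (intro coprime_blocks[OF pr mono]) auto
  have c1': "coprime A q" using c1 by simp
  have split2: "{1..s-1} = {1..s-2} \<union> {s-1}" using assms(5) by auto
  have Aq: "A * q = (\<Prod>i=1..s-1. p i)" unfolding A_def q_def split2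
    by (subst prod.union_disjoint) auto
  have c2: "coprime (A*q) B" unfolding Aq B_def
    using assms(5,6) by (intro coprime_blocks[OF pr mono]) auto
  have nAq: "n = (A*q) * B" using nA by simp
  have q2: "q \<ge> 2" using q by (simp add: prime_ge_2_nat)
  have Aq2: "A*q \<ge> 2" proof -
    have "A*1 \<le> A*q" using q2 by (intro mult_le_mono2) simp
    then show ?thesis using A2 by linarith
  qed
  have d1: "pg_deg n (q*B) = A - 1 + totient A * (q*B - 1)"
    using deg_formula[OF nA c1 A2] Bpos q2 by simp
  have d2: "pg_deg n B = A*q - 1 + totient (A*q) * (B - 1)"
    using deg_formula[OF nAq c2 Aq2 Bpos] .
  have tq: "totient (A*q) = totient A * (q - 1)"
    using totient_mult_coprime[OF c1'] totient_prime[OF q] by simp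
  define t where "t = real (totient A)"
  have tpos: "t > 0" unfolding t_def using Apos by simp
  have qB1: "q*B \<ge> 1" using q2 Bpos by simp
  have rd1: "real (pg_deg n (q*B)) = real A - 1 + t * (real q * real B - 1)"
    unfolding d1 t_def using Apos qB1 by (simp add: of_nat_diff)
  have rd2: "real (pg_deg n B) = real A * real q - 1 + t * (real q - 1) * (real B - 1)"
  proof -
    have "A*q \<ge> 1" using Apos q2 by simp
    then have e1: "real (A*q - 1) = real A * real q - 1" by (simp add: of_nat_diff)
    have e2: "real (q - 1) = real q - 1" using q2 by (simp add: of_nat_diff)
    have e3: "real (B - 1) = real B - 1" using Bpos by (simp add: of_nat_diff)
    show ?thesis unfolding d2 tq t_def of_nat_add of_nat_mult e1 e2 e3 by simp
  qed
  define R where "R = (real A / t - 1) * (real q - 1) + 1"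
  have key: "real (pg_deg n (q*B)) - real (pg_deg n B) = t * (real B - R)"
    unfolding rd1 rd2 R_def using tpos by (simp add: field_simps)
  have tq': "real (totient q) = real q - 1" using totient_prime[OF q] q2 by (simp add: of_nat_diff)
  have ge: "pg_deg n (q*B) \<ge> pg_deg n B \<longleftrightarrow> real B \<ge> R"
  proof -
    have "pg_deg n (q*B) \<ge> pg_deg n B \<longleftrightarrow> real (pg_deg n (q*B)) - real (pg_deg n B) \<ge> 0" by simp
    also have "\<dots> \<longleftrightarrow> real B \<ge> R" unfolding key using tpos by (simp add: zero_le_mult_iff)
    finally show ?thesis .
  qed
  have eq: "pg_deg n (q*B) = pg_deg n B \<longleftrightarrow> real B = R"
  proof -
    have "pg_deg n (q*B) = pg_deg n B \<longleftrightarrow> real (pg_deg n (q*B)) - real (pg_deg n B) = 0" by simp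
    also have "\<dots> \<longleftrightarrow> real B = R" unfolding key using tpos by simp
    finally show ?thesis .
  qed
  have tq'': "real (totient (p (s-1))) = real q - 1" using tq' unfolding q_def .
  show ?thesis using ge eq unfolding tq'' R_def t_def qB unfolding A_def B_def q_def by (rule conjI)
qed

end
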